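(* Let $A$ be the $N\times N$ extended Cartan matrix of one of the affine extensions $A_4^=$, $D_6^>$, $D_6^=$, $D_6^<$, $E_8^=$ (so $N=5,7,7,7,9$). Let $B=\begin{pmatrix}2&v^T\\ w&A\end{pmatrix}$ be an $(N+1)\times(N+1)$ matrix with $v,w\in\mathbb{Z}^N$ such that $v_i\le 0$ and $w_i\le0$ for all $i$, $v_i=0$ if and only if $w_i=0$, and $\det B=0$ (i.e. $B$ is a Kac–Moody-type affine extension of $A$ by one further node). Then $v=w=0$, i.e. the additional node is disconnected from the diagram.
   Context: The Cartan matrix of a simply-laced Dynkin diagram has diagonal entries $2$, entry $-1$ for joined nodes and $0$ otherwise. The extended Cartan matrices are (indices $0,\dots,n$): $A_4^=$: simply-laced cycle $0-1-2-3-4-0$. $D_6^=$: simply-laced diagram with chain $1-2-3-4-5$, node $6$ joined to $4$, node $0$ joined to $2$. $D_6^<$: the $D_6$ part (chain $1-2-3-4-5$, node $6$ joined to $4$, simply laced) together with node $0$ where $A_{01}=-2$, $A_{10}=-1$ and $A_{0j}=A_{j0}=0$ for $j\ge2$. $D_6^>$: same as $D_6^<$ but with $A_{01}=-1$, $A_{10}=-2$. $E_8^=$: simply-laced diagram with chain $0-1-2-3-4-5-6-7$ and node $8$ joined to node $5$. *)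

theory Defs
  imports "Jordan_Normal_Form.Determinant"
begin

definition simply_laced_cartan :: "nat \<Rightarrow> (nat \<times> nat) set \<Rightarrow> int mat" where
  "simply_laced_cartan n E = mat n n (\<lambda>(i,j). if i = j then 2
      else if (i,j) \<in> E \<or> (j,i) \<in> E then -1 else 0)"

definition cartan_A4_eq :: "int mat" where
  "cartan_A4_eq = simply_laced_cartan 5 {(0,1),(1,2),(2,3),(3,4),(4,0)}"

definition cartan_D6_eq :: "int mat" where
  "cartan_D6_eq = simply_laced_cartan 7 {(1,2),(2,3),(3,4),(4,5),(6,4),(0,2)}"

definition cartan_D6_node0 :: "int \<Rightarrow> int \<Rightarrow> int mat" where
  "cartan_D6_node0 a b = mat 7 7 (\<lambda>(i,j).
      if (i,j) = (0,1) then a else if (i,j) = (1,0) then b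
      else simply_laced_cartan 7 {(1,2),(2,3),(3,4),(4,5),(6,4)} $$ (i,j))"

definition cartan_D6_lt :: "int mat" where
  "cartan_D6_lt = cartan_D6_node0 (-2) (-1)"

definition cartan_D6_gt :: "int mat" where
  "cartan_D6_gt = cartan_D6_node0 (-1) (-2)"

definition cartan_E8_eq :: "int mat" where
  "cartan_E8_eq = simply_laced_cartan 9
     {(0,1),(1,2),(2,3),(3,4),(4,5),(5,6),(6,7),(8,5)}"

text \<open>The (N+1)x(N+1) block matrix B = [[2, v^T],[w, A]]; the new node has index 0,
  node i of A becomes index i+1.\<close>
definition extend_matrix :: "int mat \<Rightarrow> int vec \<Rightarrow> int vec \<Rightarrow> int mat" where
  "extend_matrix A v w = mat (dim_row A + 1) (dim_col A + 1) (\<lambda>(i,j).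
      if i = 0 \<and> j = 0 then 2
      else if i = 0 then v $ (j - 1)
      else if j = 0 then w $ (i - 1)
      else A $$ (i - 1, j - 1))"

end

theory Submission imports Defs begin

lemma core:
 fixes a :: "nat \<Rightarrow> nat \<Rightarrow> int" and vv ww dl dr y :: "nat \<Rightarrow> int" and x0 :: int
 assumes E: "\<forall>i<N. ww i * x0 + (\<Sum>j<N. a i j * y j) = 0"
 and E0: "2*x0 + (\<Sum>j<N. vv j * y j) = 0"
 and L: "\<forall>j<N. (\<Sum>i<N. dl i * a i j) = 0"
 and dlpos: "\<forall>i<N. dl i > 0" and drpos: "\<forall>i<N. dr i > 0"
 and K: "\<And>z. \<forall>i<N. (\<Sum>j<N. a i j * z j) = 0 \<Longrightarrow> \<exists>t. \<forall>j<N. z j = t * dr j"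
 and S: "\<forall>i<N. vv i \<le> 0 \<and> ww i \<le> 0" and I: "\<forall>i<N. vv i = 0 \<longleftrightarrow> ww i = 0"
 and nz: "x0 \<noteq> 0 \<or> (\<exists>j<N. y j \<noteq> 0)"
 shows "\<forall>i<N. vv i = 0 \<and> ww i = 0"
proof (cases "x0 = 0")
  case True
  then have "\<forall>i<N. (\<Sum>j<N. a i j * y j) = 0" using E by auto
  then obtain t where t: "\<forall>j<N. y j = t * dr j" using K by blast
  have "t \<noteq> 0" using nz True t by auto
  have "(\<Sum>j<N. vv j * y j) = t * (\<Sum>j<N. vv j * dr j)"
    by (simp add: sum_distrib_left t mult_ac)
  with E0 True \<open>t \<noteq> 0\<close> have s: "(\<Sum>j<N. vv j * dr j) = 0" by simp
  have "\<forall>j\<in>{..<N}. vv j * dr j \<le> 0" using S drpos by (auto intro: mult_nonpos_nonneg less_imp_le)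
  then have "\<forall>j\<in>{..<N}. vv j * dr j = 0" using sum_nonneg_eq_0_iff[of "{..<N}" "\<lambda>j. - (vv j * dr j)"] s by (auto simp: sum_negf)
  then have "\<forall>j<N. vv j = 0" using drpos by force
  then show ?thesis using I by auto
next
  case False
  have "0 = (\<Sum>i<N. dl i * (ww i * x0 + (\<Sum>j<N. a i j * y j)))" using E by simp
  also have "\<dots> = x0 * (\<Sum>i<N. dl i * ww i) + (\<Sum>i<N. \<Sum>j<N. dl i * a i j * y j)"
    by (simp add: algebra_simps sum.distrib sum_distrib_left)
  also have "(\<Sum>i<N. \<Sum>j<N. dl i * a i j * y j) = (\<Sum>j<N. (\<Sum>i<N. dl i * a i j) * y j)"
    by (subst sum.swap) (simp add: sum_distrib_right)
  also have "\<dots> = 0" using L by simp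
  finally have s: "(\<Sum>i<N. dl i * ww i) = 0" using False by simp
  have "\<forall>j\<in>{..<N}. dl j * ww j \<le> 0" using S dlpos by (auto intro: mult_nonneg_nonpos less_imp_le)
  then have "\<forall>j\<in>{..<N}. dl j * ww j = 0" using sum_nonneg_eq_0_iff[of "{..<N}" "\<lambda>j. - (dl j * ww j)"] s by (auto simp: sum_negf)
  then have "\<forall>j<N. ww j = 0" using dlpos by force
  then show ?thesis using I by auto
qed


lemma L_A4: "\<forall>j<5. (\<Sum>i<5. ([1,1,1,1,1::int] ! i) * cartan_A4_eq $$ (i,j)) = 0"
  unfolding cartan_A4_eq_def simply_laced_cartan_def
  by (simp add: eval_nat_numeral)

lemma K_A4: "\<forall>i<5. (\<Sum>j<5. cartan_A4_eq $$ (i,j) * z j) = 0 \<Longrightarrow> \<exists>t. \<forall>j<5. z j = t * ([1,1,1,1,1::int] ! j)"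
  unfolding cartan_A4_eq_def simply_laced_cartan_def
  by (simp add: eval_nat_numeral less_Suc_eq all_conj_distrib)

lemma P_A4: "\<forall>i<5. 0 < ([1,1,1,1,1::int] ! i)" "\<forall>i<5. 0 < ([1,1,1,1,1::int] ! i)"
  by (simp_all add: eval_nat_numeral less_Suc_eq all_conj_distrib)

lemma C_A4: "cartan_A4_eq \<in> carrier_mat N N \<Longrightarrow> N = 5"
  unfolding cartan_A4_eq_def simply_laced_cartan_def by auto

lemma L_D6eq: "\<forall>j<7. (\<Sum>i<7. ([1,1,2,2,2,1,1::int] ! i) * cartan_D6_eq $$ (i,j)) = 0"
  unfolding cartan_D6_eq_def simply_laced_cartan_def
  by (simp add: eval_nat_numeral)

lemma K_D6eq: "\<forall>i<7. (\<Sum>j<7. cartan_D6_eq $$ (i,j) * z j) = 0 \<Longrightarrow> \<exists>t. \<forall>j<7. z j = t * ([1,1,2,2,2,1,1::int] ! j)"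
  unfolding cartan_D6_eq_def simply_laced_cartan_def
  by (simp add: eval_nat_numeral less_Suc_eq all_conj_distrib)

lemma P_D6eq: "\<forall>i<7. 0 < ([1,1,2,2,2,1,1::int] ! i)" "\<forall>i<7. 0 < ([1,1,2,2,2,1,1::int] ! i)"
  by (simp_all add: eval_nat_numeral less_Suc_eq all_conj_distrib)

lemma C_D6eq: "cartan_D6_eq \<in> carrier_mat N N \<Longrightarrow> N = 7"
  unfolding cartan_D6_eq_def simply_laced_cartan_def by auto

lemma L_D6lt: "\<forall>j<7. (\<Sum>i<7. ([1,2,2,2,2,1,1::int] ! i) * cartan_D6_lt $$ (i,j)) = 0"
  unfolding cartan_D6_lt_def cartan_D6_node0_def simply_laced_cartan_def
  by (simp add: eval_nat_numeral)

lemma K_D6lt: "\<forall>i<7. (\<Sum>j<7. cartan_D6_lt $$ (i,j) * z j) = 0 \<Longrightarrow> \<exists>t. \<forall>j<7. z j = t * ([2,2,2,2,2,1,1::int] ! j)"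
  unfolding cartan_D6_lt_def cartan_D6_node0_def simply_laced_cartan_def
  by (simp add: eval_nat_numeral less_Suc_eq all_conj_distrib)

lemma P_D6lt: "\<forall>i<7. 0 < ([1,2,2,2,2,1,1::int] ! i)" "\<forall>i<7. 0 < ([2,2,2,2,2,1,1::int] ! i)"
  by (simp_all add: eval_nat_numeral less_Suc_eq all_conj_distrib)

lemma C_D6lt: "cartan_D6_lt \<in> carrier_mat N N \<Longrightarrow> N = 7"
  unfolding cartan_D6_lt_def cartan_D6_node0_def simply_laced_cartan_def by auto

lemma L_D6gt: "\<forall>j<7. (\<Sum>i<7. ([2,2,2,2,2,1,1::int] ! i) * cartan_D6_gt $$ (i,j)) = 0"
  unfolding cartan_D6_gt_def cartan_D6_node0_def simply_laced_cartan_def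
  by (simp add: eval_nat_numeral)

lemma K_D6gt: "\<forall>i<7. (\<Sum>j<7. cartan_D6_gt $$ (i,j) * z j) = 0 \<Longrightarrow> \<exists>t. \<forall>j<7. z j = t * ([1,2,2,2,2,1,1::int] ! j)"
  unfolding cartan_D6_gt_def cartan_D6_node0_def simply_laced_cartan_def
  by (simp add: eval_nat_numeral less_Suc_eq all_conj_distrib)

lemma P_D6gt: "\<forall>i<7. 0 < ([2,2,2,2,2,1,1::int] ! i)" "\<forall>i<7. 0 < ([1,2,2,2,2,1,1::int] ! i)"
  by (simp_all add: eval_nat_numeral less_Suc_eq all_conj_distrib)

lemma C_D6gt: "cartan_D6_gt \<in> carrier_mat N N \<Longrightarrow> N = 7"
  unfolding cartan_D6_gt_def cartan_D6_node0_def simply_laced_cartan_def by auto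

lemma L_E8: "\<forall>j<9. (\<Sum>i<9. ([1,2,3,4,5,6,4,2,3::int] ! i) * cartan_E8_eq $$ (i,j)) = 0"
  unfolding cartan_E8_eq_def simply_laced_cartan_def
  by (simp add: eval_nat_numeral)

lemma K_E8: "\<forall>i<9. (\<Sum>j<9. cartan_E8_eq $$ (i,j) * z j) = 0 \<Longrightarrow> \<exists>t. \<forall>j<9. z j = t * ([1,2,3,4,5,6,4,2,3::int] ! j)"
  unfolding cartan_E8_eq_def simply_laced_cartan_def
  by (simp add: eval_nat_numeral less_Suc_eq all_conj_distrib)

lemma P_E8: "\<forall>i<9. 0 < ([1,2,3,4,5,6,4,2,3::int] ! i)" "\<forall>i<9. 0 < ([1,2,3,4,5,6,4,2,3::int] ! i)"
  by (simp_all add: eval_nat_numeral less_Suc_eq all_conj_distrib)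

lemma C_E8: "cartan_E8_eq \<in> carrier_mat N N \<Longrightarrow> N = 9"
  unfolding cartan_E8_eq_def simply_laced_cartan_def by auto

lemma case_lemma:
  fixes A :: "int mat" and v w :: "int vec" and dl dr :: "nat \<Rightarrow> int"
  assumes AN: "A \<in> carrier_mat N N"
  and L: "\<forall>j<N. (\<Sum>i<N. dl i * A $$ (i,j)) = 0"
  and dlpos: "\<forall>i<N. dl i > 0" and drpos: "\<forall>i<N. dr i > 0"
  and K: "\<And>z. \<forall>i<N. (\<Sum>j<N. A $$ (i,j) * z j) = 0 \<Longrightarrow> \<exists>t. \<forall>j<N. z j = t * dr j"
  and vN: "v \<in> carrier_vec N" and wN: "w \<in> carrier_vec N"
  and S: "\<forall>i<N. v $ i \<le> 0 \<and> w $ i \<le> 0"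
  and I: "\<forall>i<N. v $ i = 0 \<longleftrightarrow> w $ i = 0"
  and D: "det (extend_matrix A v w) = 0"
  shows "v = 0\<^sub>v N \<and> w = 0\<^sub>v N"
proof -
  define B where "B = extend_matrix A v w"
  have dims: "dim_row A = N" "dim_col A = N" using AN by auto
  have BC: "B \<in> carrier_mat (Suc N) (Suc N)" unfolding B_def extend_matrix_def dims by simp
  obtain x where xC: "x \<in> carrier_vec (Suc N)" and xnz: "x \<noteq> 0\<^sub>v (Suc N)"
     and Bx: "B *\<^sub>v x = 0\<^sub>v (Suc N)"
    using det_0_iff_vec_prod_zero[OF BC] D unfolding B_def by blast
  have row: "(\<Sum>j<Suc N. B $$ (i,j) * x $ j) = 0" if "i < Suc N" for i
  proof -
    have "(B *\<^sub>v x) $ i = 0" using Bx that by simp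
    then show ?thesis using that BC xC
      by (simp add: mult_mat_vec_def scalar_prod_def atLeast0LessThan)
  qed
  have Bent: "B $$ (0,0) = 2" "\<And>j. j < N \<Longrightarrow> B $$ (0, Suc j) = v $ j"
     "\<And>i. i < N \<Longrightarrow> B $$ (Suc i, 0) = w $ i"
     "\<And>i j. i < N \<Longrightarrow> j < N \<Longrightarrow> B $$ (Suc i, Suc j) = A $$ (i,j)"
    unfolding B_def extend_matrix_def dims by auto
  have E0: "2 * x$0 + (\<Sum>j<N. v $ j * x $ Suc j) = 0"
    using row[of 0] unfolding sum.lessThan_Suc_shift by (simp add: Bent cong: sum.cong_simp)
  have E: "\<forall>i<N. w $ i * x$0 + (\<Sum>j<N. A $$ (i,j) * x $ Suc j) = 0"
    proof (intro allI impI)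
    fix i assume "i < N"
    then show "w $ i * x$0 + (\<Sum>j<N. A $$ (i,j) * x $ Suc j) = 0"
      using row[of "Suc i"] unfolding sum.lessThan_Suc_shift by (simp add: Bent cong: sum.cong_simp)
  qed
  have nz: "x$0 \<noteq> 0 \<or> (\<exists>j<N. x $ Suc j \<noteq> 0)"
  proof (rule ccontr)
    assume "\<not> ?thesis"
    then have "\<forall>k<Suc N. x $ k = 0" by (auto simp: less_Suc_eq_0_disj)
    then have "x = 0\<^sub>v (Suc N)" using xC by (auto intro!: eq_vecI)
    with xnz show False by simp
  qed
  have r: "\<forall>i<N. v $ i = 0 \<and> w $ i = 0"
    using core[OF E E0 L dlpos drpos K S I nz] by simp
  show ?thesis using r vN wN by (auto intro!: eq_vecI)
qed


theorem mainTheorem3: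
  fixes A :: "int mat" and v w :: "int vec" and N :: nat
  assumes "A \<in> {cartan_A4_eq, cartan_D6_gt, cartan_D6_eq, cartan_D6_lt, cartan_E8_eq}"
    and "A \<in> carrier_mat N N"
    and "v \<in> carrier_vec N" and "w \<in> carrier_vec N"
    and "\<forall>i<N. v $ i \<le> 0 \<and> w $ i \<le> 0"
    and "\<forall>i<N. v $ i = 0 \<longleftrightarrow> w $ i = 0"
    and "det (extend_matrix A v w) = 0"
  shows "v = 0\<^sub>v N \<and> w = 0\<^sub>v N"
proof -
  from assms(1) consider "A = cartan_A4_eq" | "A = cartan_D6_gt" | "A = cartan_D6_eq"
    | "A = cartan_D6_lt" | "A = cartan_E8_eq" by blast
  then show ?thesis
  proof cases
    case 1
    have N: "N = 5" using C_A4 assms(2) 1 by simp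
    show ?thesis
      by (rule case_lemma[where dl="\<lambda>i. [1,1,1,1,1::int] ! i" and dr="\<lambda>j. [1,1,1,1,1::int] ! j", OF assms(2) _ _ _ _ assms(3,4,5,6,7)])
         (use 1 N L_A4 P_A4 K_A4 in auto)
  next
    case 2
    have N: "N = 7" using C_D6gt assms(2) 2 by simp
    show ?thesis
      by (rule case_lemma[where dl="\<lambda>i. [2,2,2,2,2,1,1::int] ! i" and dr="\<lambda>j. [1,2,2,2,2,1,1::int] ! j", OF assms(2) _ _ _ _ assms(3,4,5,6,7)])
         (use 2 N L_D6gt P_D6gt K_D6gt in auto)
  next
    case 3
    have N: "N = 7" using C_D6eq assms(2) 3 by simp
    show ?thesis
      by (rule case_lemma[where dl="\<lambda>i. [1,1,2,2,2,1,1::int] ! i" and dr="\<lambda>j. [1,1,2,2,2,1,1::int] ! j", OF assms(2) _ _ _ _ assms(3,4,5,6,7)])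
         (use 3 N L_D6eq P_D6eq K_D6eq in auto)
  next
    case 4
    have N: "N = 7" using C_D6lt assms(2) 4 by simp
    show ?thesis
      by (rule case_lemma[where dl="\<lambda>i. [1,2,2,2,2,1,1::int] ! i" and dr="\<lambda>j. [2,2,2,2,2,1,1::int] ! j", OF assms(2) _ _ _ _ assms(3,4,5,6,7)])
         (use 4 N L_D6lt P_D6lt K_D6lt in auto)
  next
    case 5
    have N: "N = 9" using C_E8 assms(2) 5 by simp
    show ?thesis
      by (rule case_lemma[where dl="\<lambda>i. [1,2,3,4,5,6,4,2,3::int] ! i" and dr="\<lambda>j. [1,2,3,4,5,6,4,2,3::int] ! j", OF assms(2) _ _ _ _ assms(3,4,5,6,7)])
         (use 5 N L_E8 P_E8 K_E8 in auto)
  qed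
qed

end
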